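(* Let $n\ge 3$. Then $\mathit{DCD}(n)$ is isomorphic to an incidence sum $\mathcal C_1\oplus_I\mathcal C_2$ such that: (1) $\mathcal C_1$ is a configuration of type $\left(\binom{2n-2}{n-2}_n,\ \binom{2n-2}{n-1}_{n-1}\right)$; (2) $\mathcal C_2$ is a configuration of type $\left(\binom{2n-2}{n-1}_{n-1},\ \binom{2n-2}{n-2}_n\right)$; (3) the set $I$ of new incidences consists of $\binom{2n-2}{n-1}$ point-line pairs whose points belong to $\mathcal C_2$ and whose lines belong to $\mathcal C_1$; (4) $\mathcal C_1$ and $\mathcal C_2$ are dual to each other; (5) $\mathcal C_1$ and $\mathcal C_2$ are flag-transitive.
   Context: $\mathit{DCD}(n)$: the combinatorial configuration whose points are the $n$-subsets and whose lines are the $(n-1)$-subsets of $\{1,\dots,2n-1\}$, a point being incident with a line iff the line's subset is contained in the point's subset (equivalently, the points and lines cut out by $2n-1$ hyperplanes in general position in projective $n$-space, by $n$ and by $n-1$ of them respectively). A configuration of type $(p_q, b_k)$ is an incidence structure with $p$ points and $b$ lines (blocks), each point incident with exactly $q$ lines and each line with exactly $k$ points. Incidence sum: given configurations $\mathcal C_1,\mathcal C_2$ with point sets $\mathcal P_1,\mathcal P_2$ and line sets $\mathcal L_1,\mathcal L_2$, and a set $I\subseteq \mathcal P_1\times\mathcal L_2\cup\mathcal P_2\times\mathcal L_1$, the incidence sum $\mathcal C_1\oplus_I\mathcal C_2$ is the incidence structure with points $\mathcal P_1\sqcup\mathcal P_2$, lines $\mathcal L_1\sqcup\mathcal L_2$,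 and incidences those of $\mathcal C_1$, those of $\mathcal C_2$, and the pairs in $I$. Two configurations are dual to each other if one is isomorphic to the other with the roles of points and lines interchanged. A configuration is flag-transitive if its automorphism group (incidence-preserving bijections of points and of lines) acts transitively on the set of incident point-line pairs. *)

theory Defs
  imports Main
begin

text \<open>An incidence structure: a set of points, a set of lines (blocks) and an
incidence predicate (only its restriction to points \<times> lines matters).\<close>
record ('p, 'l) incidence_structure =
  pts :: "'p set"
  lns :: "'l set"
  inc :: "'p \<Rightarrow> 'l \<Rightarrow> bool"

definition DCD :: "nat \<Rightarrow> (nat set, nat set) incidence_structure" where
  "DCD n = \<lparr> pts = {S. S \<subseteq> {1..2*n-1} \<and> card S = n},
             lns = {S. S \<subseteq> {1..2*n-1} \<and> card S = n - 1},
             inc = (\<lambda>P L. L \<subseteq> P) \<rparr>"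

definition is_configuration ::
  "('p, 'l) incidence_structure \<Rightarrow> nat \<Rightarrow> nat \<Rightarrow> nat \<Rightarrow> nat \<Rightarrow> bool" where
  "is_configuration C p q b k \<longleftrightarrow>
     finite (pts C) \<and> finite (lns C) \<and> card (pts C) = p \<and> card (lns C) = b \<and>
     (\<forall>x\<in>pts C. card {L\<in>lns C. inc C x L} = q) \<and>
     (\<forall>L\<in>lns C. card {x\<in>pts C. inc C x L} = k)"

text \<open>Incidence sum C1 \<oplus>_I C2 (disjoint union via sum types).
The set I is required (in the theorem) to lie in P1 \<times> L2 \<union> P2 \<times> L1.\<close>
definition incidence_sum ::
  "('p1, 'l1) incidence_structure \<Rightarrow> ((('p1 + 'p2) \<times> ('l1 + 'l2)) set) \<Rightarrow>
   ('p2, 'l2) incidence_structure \<Rightarrow> ('p1 + 'p2, 'l1 + 'l2) incidence_structure" where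
  "incidence_sum C1 I C2 = \<lparr> pts = pts C1 <+> pts C2, lns = lns C1 <+> lns C2,
     inc = (\<lambda>x L. case (x, L) of
              (Inl p, Inl l) \<Rightarrow> inc C1 p l
            | (Inr p, Inr l) \<Rightarrow> inc C2 p l
            | _ \<Rightarrow> (x, L) \<in> I) \<rparr>"

definition valid_sum_set ::
  "('p1, 'l1) incidence_structure \<Rightarrow> ((('p1 + 'p2) \<times> ('l1 + 'l2)) set) \<Rightarrow>
   ('p2, 'l2) incidence_structure \<Rightarrow> bool" where
  "valid_sum_set C1 I C2 \<longleftrightarrow>
     I \<subseteq> {(Inl x, Inr L) | x L. x \<in> pts C1 \<and> L \<in> lns C2}
        \<union> {(Inr x, Inl L) | x L. x \<in> pts C2 \<and> L \<in> lns C1}"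

definition isomorphic ::
  "('p1, 'l1) incidence_structure \<Rightarrow> ('p2, 'l2) incidence_structure \<Rightarrow> bool" where
  "isomorphic C D \<longleftrightarrow> (\<exists>f g. bij_betw f (pts C) (pts D) \<and> bij_betw g (lns C) (lns D) \<and>
     (\<forall>x\<in>pts C. \<forall>L\<in>lns C. inc D (f x) (g L) \<longleftrightarrow> inc C x L))"

definition dual_structure :: "('p, 'l) incidence_structure \<Rightarrow> ('l, 'p) incidence_structure" where
  "dual_structure C = \<lparr> pts = lns C, lns = pts C, inc = (\<lambda>L x. inc C x L) \<rparr>"

definition dual_to ::
  "('p1, 'l1) incidence_structure \<Rightarrow> ('p2, 'l2) incidence_structure \<Rightarrow> bool" where
  "dual_to C D \<longleftrightarrow> isomorphic C (dual_structure D)"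

definition automorphism :: "('p, 'l) incidence_structure \<Rightarrow> ('p \<Rightarrow> 'p) \<Rightarrow> ('l \<Rightarrow> 'l) \<Rightarrow> bool" where
  "automorphism C f g \<longleftrightarrow> bij_betw f (pts C) (pts C) \<and> bij_betw g (lns C) (lns C) \<and>
     (\<forall>x\<in>pts C. \<forall>L\<in>lns C. inc C (f x) (g L) \<longleftrightarrow> inc C x L)"

definition flags :: "('p, 'l) incidence_structure \<Rightarrow> ('p \<times> 'l) set" where
  "flags C = {(x, L). x \<in> pts C \<and> L \<in> lns C \<and> inc C x L}"

definition flag_transitive :: "('p, 'l) incidence_structure \<Rightarrow> bool" where
  "flag_transitive C \<longleftrightarrow> (\<forall>(x, L)\<in>flags C. \<forall>(y, M)\<in>flags C.
     \<exists>f g. automorphism C f g \<and> f x = y \<and> g L = M)"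

end

theory Submission
  imports Defs
begin

definition K :: "nat set \<Rightarrow> nat \<Rightarrow> nat \<Rightarrow> (nat set, nat set) incidence_structure" where
  "K A a b = \<lparr> pts = {S. S \<subseteq> A \<and> card S = a}, lns = {S. S \<subseteq> A \<and> card S = b},
              inc = (\<lambda>P L. L \<subseteq> P) \<rparr>"

lemma K_simps[simp]: "pts (K A a b) = {S. S \<subseteq> A \<and> card S = a}"
  "lns (K A a b) = {S. S \<subseteq> A \<and> card S = b}" "inc (K A a b) = (\<lambda>P L. L \<subseteq> P)"
  by (simp_all add: K_def)

lemma insert_decomp:
  assumes "finite P" "L \<subseteq> P" "card P = Suc (card L)"
  obtains x where "x \<notin> L" "x \<in> P" "P = insert x L"
proof -
  have "finite L" using assms(1,2) by (rule rev_finite_subset)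
  hence "card (P - L) = 1" using assms by (simp add: card_Diff_subset)
  then obtain x where "P - L = {x}" by (meson card_1_singletonE)
  then show ?thesis using that assms(2) by blast
qed

lemma K_config:
  assumes "finite A" "a \<ge> 1" "a \<le> card A"
  shows "is_configuration (K A a (a-1)) (card A choose a) a (card A choose (a-1)) (card A - (a-1))"
  unfolding is_configuration_def
proof (intro conjI ballI)
  show "finite (pts (K A a (a - 1)))" "finite (lns (K A a (a - 1)))" using assms(1) by auto
  show "card (pts (K A a (a - 1))) = card A choose a" "card (lns (K A a (a - 1))) = card A choose (a-1)"
    using n_subsets[OF assms(1)] by auto
next
  fix P assume P: "P \<in> pts (K A a (a - 1))"
  have "{L \<in> lns (K A a (a - 1)). inc (K A a (a - 1)) P L} = {L. L \<subseteq> P \<and> card L = a - 1}"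
    using P by auto
  moreover have "finite P" using assms(1) P by (intro rev_finite_subset[of A P]) simp_all
  ultimately show "card {L \<in> lns (K A a (a - 1)). inc (K A a (a - 1)) P L} = a"
    using n_subsets[of P "a-1"] P assms(2) binomial_symmetric[of "a-1" a]
    by simp
next
  fix L assume L: "L \<in> lns (K A a (a - 1))"
  have fL: "finite L" using assms(1) L by (intro rev_finite_subset[of A L]) simp_all
  have eq: "{x \<in> pts (K A a (a - 1)). inc (K A a (a - 1)) x L} = (\<lambda>x. insert x L) ` (A - L)"
  proof
    show "(\<lambda>x. insert x L) ` (A - L) \<subseteq> {x \<in> pts (K A a (a - 1)). inc (K A a (a - 1)) x L}"
      using L fL assms(2) by auto
  next
    show "{x \<in> pts (K A a (a - 1)). inc (K A a (a - 1)) x L} \<subseteq> (\<lambda>x. insert x L) ` (A - L)"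
    proof
      fix P assume "P \<in> {x \<in> pts (K A a (a - 1)). inc (K A a (a - 1)) x L}"
      hence P: "P \<subseteq> A" "card P = a" "L \<subseteq> P" by auto
      have "finite P" using assms(1) P(1) by (rule rev_finite_subset)
      moreover have "card P = Suc (card L)" using P(2) L assms(2) by simp
      ultimately obtain x where "x \<notin> L" "x \<in> P" "P = insert x L"
        using P(3) by (metis insert_decomp)
      thus "P \<in> (\<lambda>x. insert x L) ` (A - L)" using P(1) by blast
    qed
  qed
  have inj: "inj_on (\<lambda>x. insert x L) (A - L)" unfolding inj_on_def by blast
  show "card {x \<in> pts (K A a (a - 1)). inc (K A a (a - 1)) x L} = card A - (a - 1)"
    unfolding eq card_image[OF inj] using L by (simp add: card_Diff_subset fL)
qed

lemma image_bij_subsets: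
  assumes "bij_betw s A A" "finite A"
  shows "bij_betw ((`) s) {S. S \<subseteq> A \<and> card S = k} {S. S \<subseteq> A \<and> card S = k}"
proof -
  have inj: "inj_on s A" and im: "s ` A = A" using assms by (auto simp: bij_betw_def)
  show ?thesis unfolding bij_betw_def
  proof (intro conjI)
    show "inj_on ((`) s) {S. S \<subseteq> A \<and> card S = k}"
    proof (rule inj_onI)
      fix X Y assume "X \<in> {S. S \<subseteq> A \<and> card S = k}" "Y \<in> {S. S \<subseteq> A \<and> card S = k}" "s ` X = s ` Y"
      hence "X \<subseteq> A" "Y \<subseteq> A" "s ` X = s ` Y" by simp_all
      thus "X = Y" using inj_on_image_eq_iff[OF inj] by simp
    qed
    show "(`) s ` {S. S \<subseteq> A \<and> card S = k} = {S. S \<subseteq> A \<and> card S = k}"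
    proof
      show "(`) s ` {S. S \<subseteq> A \<and> card S = k} \<subseteq> {S. S \<subseteq> A \<and> card S = k}"
      proof
        fix T assume "T \<in> (`) s ` {S. S \<subseteq> A \<and> card S = k}"
        then obtain S where S: "S \<subseteq> A" "card S = k" "T = s ` S" by blast
        have "card (s ` S) = card S" by (rule card_image[OF inj_on_subset[OF inj S(1)]])
        moreover have "s ` S \<subseteq> A" using S(1) im by blast
        ultimately show "T \<in> {S. S \<subseteq> A \<and> card S = k}" using S by simp
      qed
      show "{S. S \<subseteq> A \<and> card S = k} \<subseteq> (`) s ` {S. S \<subseteq> A \<and> card S = k}"
      proof
        fix T assume T: "T \<in> {S. S \<subseteq> A \<and> card S = k}"
        let ?S = "inv_into A s ` T"
        have TA: "T \<subseteq> A" and cT: "card T = k" using T by auto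
        have sS: "s ` ?S = T" by (rule image_inv_into_cancel[OF im TA])
        have SA: "?S \<subseteq> A"
        proof
          fix y assume "y \<in> ?S"
          then obtain t where t: "t \<in> T" "y = inv_into A s t" by blast
          have "t \<in> s ` A" using t(1) TA im by blast
          thus "y \<in> A" unfolding t(2) by (rule inv_into_into)
        qed
        have cS: "card ?S = k"
          using card_image[OF inj_on_subset[OF inj SA]] sS cT by simp
        show "T \<in> (`) s ` {S. S \<subseteq> A \<and> card S = k}"
        proof (rule image_eqI[where x="?S"])
          show "T = s ` ?S" using sS by simp
          show "?S \<in> {S. S \<subseteq> A \<and> card S = k}" using SA cS by simp
        qed
      qed
    qed
  qed
qed

lemma inj_on_image_subset_iff_local:
  assumes "inj_on s A" "x \<subseteq> A" "L \<subseteq> A"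
  shows "(s ` L \<subseteq> s ` x) = (L \<subseteq> x)"
proof
  assume h: "s ` L \<subseteq> s ` x"
  show "L \<subseteq> x"
  proof
    fix y assume "y \<in> L"
    hence "s y \<in> s ` x" using h by auto
    then obtain z where "z \<in> x" "s y = s z" by blast
    moreover have "y \<in> A" "z \<in> A" using \<open>y \<in> L\<close> \<open>z \<in> x\<close> assms by auto
    ultimately show "y \<in> x" using assms(1) by (metis inj_on_def)
  qed
next
  assume "L \<subseteq> x" thus "s ` L \<subseteq> s ` x" by (rule image_mono)
qed

lemma K_aut:
  assumes "bij_betw s A A" "finite A"
  shows "automorphism (K A a b) ((`) s) ((`) s)"
  unfolding automorphism_def
proof (intro conjI ballI)
  show "bij_betw ((`) s) (pts (K A a b)) (pts (K A a b))"
       "bij_betw ((`) s) (lns (K A a b)) (lns (K A a b))"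
    using image_bij_subsets[OF assms] by simp_all
next
  fix x L assume "x \<in> pts (K A a b)" "L \<in> lns (K A a b)"
  hence "x \<subseteq> A" "L \<subseteq> A" by auto
  moreover have "inj_on s A" using assms by (auto simp: bij_betw_def)
  ultimately show "inc (K A a b) (s ` x) (s ` L) = inc (K A a b) x L"
    by (simp add: inj_on_image_subset_iff_local)
qed

lemma K_flag:
  assumes "finite A" "a \<ge> 1"
  shows "flag_transitive (K A a (a-1))"
  unfolding flag_transitive_def
proof (clarify)
  fix P L P' L'
  assume F1: "(P, L) \<in> flags (K A a (a - 1))" and F2: "(P', L') \<in> flags (K A a (a - 1))"
  have h1: "P \<subseteq> A" "card P = a" "L \<subseteq> P" "card L = a - 1" using F1 by (auto simp: flags_def)
  have h2: "P' \<subseteq> A" "card P' = a" "L' \<subseteq> P'" "card L' = a - 1" using F2 by (auto simp: flags_def)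
  have fin: "finite P" "finite P'" "finite L" "finite L'"
  proof -
    show fP: "finite P" using assms(1) h1(1) by (rule rev_finite_subset)
    show fP': "finite P'" using assms(1) h2(1) by (rule rev_finite_subset)
    show "finite L" using fP h1(3) by (rule rev_finite_subset)
    show "finite L'" using fP' h2(3) by (rule rev_finite_subset)
  qed
  have cP: "card P = Suc (card L)" using h1(2,4) assms(2) by simp
  have cP': "card P' = Suc (card L')" using h2(2,4) assms(2) by simp
  obtain x where x: "x \<notin> L" "x \<in> P" "P = insert x L"
    by (rule insert_decomp[OF fin(1) h1(3) cP])
  obtain x' where x': "x' \<notin> L'" "x' \<in> P'" "P' = insert x' L'"
    by (rule insert_decomp[OF fin(2) h2(3) cP'])
  have "card L = card L'" using h1(4) h2(4) by simp
  then obtain b1 where b1: "bij_betw b1 L L'"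
    using finite_same_card_bij[OF fin(3) fin(4)] by blast
  have "card (A - P) = card (A - P')"
    using h1(1,2) h2(1,2) fin(1,2) by (simp add: card_Diff_subset)
  moreover have "finite (A - P)" "finite (A - P')" using assms(1) by simp_all
  ultimately obtain b2 where b2: "bij_betw b2 (A - P) (A - P')"
    using finite_same_card_bij by blast
  define s where "s y = (if y \<in> L then b1 y else if y = x then x' else b2 y)" for y
  have eq1: "\<And>y. y \<in> L \<Longrightarrow> s y = b1 y" by (simp add: s_def)
  have eq3: "\<And>y. y \<in> A - P \<Longrightarrow> s y = b2 y"
  proof -
    fix y assume "y \<in> A - P"
    hence "y \<notin> L" "y \<noteq> x" using x(2) h1(3) by blast+
    thus "s y = b2 y" by (simp add: s_def)
  qed
  have sx: "s x = x'" using x(1) by (simp add: s_def)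
  have s1: "bij_betw s L L'" using b1 bij_betw_cong[of L s b1 L'] eq1 by blast
  have s2: "bij_betw s {x} {x'}" using sx by (simp add: bij_betw_def)
  have s3: "bij_betw s (A - P) (A - P')" using b2 bij_betw_cong[of "A - P" s b2 "A - P'"] eq3 by blast
  have d1: "L' \<inter> {x'} = {}" using x'(1) by blast
  have s12: "bij_betw s (L \<union> {x}) (L' \<union> {x'})"
    by (rule bij_betw_combine[OF s1 s2 d1])
  have d2: "(L' \<union> {x'}) \<inter> (A - P') = {}" using x'(3) by blast
  have "bij_betw s ((L \<union> {x}) \<union> (A - P)) ((L' \<union> {x'}) \<union> (A - P'))"
    by (rule bij_betw_combine[OF s12 s3 d2])
  moreover have "(L \<union> {x}) \<union> (A - P) = A" using x(3) h1(1) by blast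
  moreover have "(L' \<union> {x'}) \<union> (A - P') = A" using x'(3) h2(1) by blast
  ultimately have s: "bij_betw s A A" by simp
  have sL: "s ` L = L'" using s1 by (simp add: bij_betw_def)
  have "s ` P = P'" unfolding x(3) x'(3) image_insert sx sL ..
  note sP = this
  show "\<exists>f g. automorphism (K A a (a - 1)) f g \<and> f P = P' \<and> g L = L'"
    using K_aut[OF s assms(1)] sL sP by blast
qed

lemma compl_bij:
  assumes "finite A" "card A = c" "a \<le> c"
  shows "bij_betw (\<lambda>S. A - S) {S. S \<subseteq> A \<and> card S = a} {S. S \<subseteq> A \<and> card S = c - a}"
proof (rule bij_betw_byWitness[where f'="\<lambda>S. A - S"])
  show "\<forall>S\<in>{S. S \<subseteq> A \<and> card S = a}. A - (A - S) = S" by auto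
  show "\<forall>S\<in>{S. S \<subseteq> A \<and> card S = c - a}. A - (A - S) = S" by auto
  show "(\<lambda>S. A - S) ` {S. S \<subseteq> A \<and> card S = a} \<subseteq> {S. S \<subseteq> A \<and> card S = c - a}"
  proof
    fix T assume "T \<in> (\<lambda>S. A - S) ` {S. S \<subseteq> A \<and> card S = a}"
    then obtain S where S: "S \<subseteq> A" "card S = a" "T = A - S" by blast
    have "finite S" using assms(1) S(1) by (rule rev_finite_subset)
    thus "T \<in> {S. S \<subseteq> A \<and> card S = c - a}" using S assms(2) by (simp add: card_Diff_subset)
  qed
  show "(\<lambda>S. A - S) ` {S. S \<subseteq> A \<and> card S = c - a} \<subseteq> {S. S \<subseteq> A \<and> card S = a}"
  proof
    fix T assume "T \<in> (\<lambda>S. A - S) ` {S. S \<subseteq> A \<and> card S = c - a}"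
    then obtain S where S: "S \<subseteq> A" "card S = c - a" "T = A - S" by blast
    have "finite S" using assms(1) S(1) by (rule rev_finite_subset)
    thus "T \<in> {S. S \<subseteq> A \<and> card S = a}" using S assms(2,3) by (simp add: card_Diff_subset)
  qed
qed

lemma K_dual:
  assumes "finite A" "card A = c" "a \<le> c" "b \<le> c"
  shows "dual_to (K A a b) (K A (c - b) (c - a))"
  unfolding dual_to_def isomorphic_def
proof (intro exI conjI ballI)
  show "bij_betw (\<lambda>S. A - S) (pts (K A a b)) (pts (dual_structure (K A (c - b) (c - a))))"
    using compl_bij[OF assms(1,2,3)] by (simp add: dual_structure_def)
  show "bij_betw (\<lambda>S. A - S) (lns (K A a b)) (lns (dual_structure (K A (c - b) (c - a))))"
    using compl_bij[OF assms(1,2,4)] by (simp add: dual_structure_def)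
next
  fix x L assume "x \<in> pts (K A a b)" "L \<in> lns (K A a b)"
  thus "inc (dual_structure (K A (c - b) (c - a))) (A - x) (A - L) = inc (K A a b) x L"
    by (auto simp: dual_structure_def)
qed

lemma split_bij:
  fixes A :: "'a set"
  assumes "finite A" "m \<notin> A" "k \<ge> 1"
  shows "bij_betw (\<lambda>S. if m \<in> S then Inr (S - {m}) else Inl S) {S. S \<subseteq> insert m A \<and> card S = k}
     ({S. S \<subseteq> A \<and> card S = k} <+> {S. S \<subseteq> A \<and> card S = k - 1})"
proof (rule bij_betw_byWitness[where f'="case_sum id (insert m)"])
  show "\<forall>S\<in>{S. S \<subseteq> insert m A \<and> card S = k}.
        case_sum id (insert m) (if m \<in> S then Inr (S - {m}) else Inl S) = S" by auto
  show "\<forall>a'\<in>{S. S \<subseteq> A \<and> card S = k} <+> {S. S \<subseteq> A \<and> card S = k - 1}.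
        (if m \<in> case_sum id (insert m) a' then Inr (case_sum id (insert m) a' - {m})
         else Inl (case_sum id (insert m) a')) = a'"
  proof (rule ballI, elim PlusE)
    fix a' :: "'a set + 'a set" and S assume "S \<in> {S. S \<subseteq> A \<and> card S = k}" "a' = Inl S"
    hence "m \<notin> S" using assms(2) by blast
    thus "(if m \<in> case_sum id (insert m) a' then Inr (case_sum id (insert m) a' - {m})
         else Inl (case_sum id (insert m) a')) = a'" using \<open>a' = Inl S\<close> by simp
  next
    fix a' :: "'a set + 'a set" and S assume "S \<in> {S. S \<subseteq> A \<and> card S = k - 1}" "a' = Inr S"
    hence "m \<notin> S" using assms(2) by blast
    thus "(if m \<in> case_sum id (insert m) a' then Inr (case_sum id (insert m) a' - {m})
         else Inl (case_sum id (insert m) a')) = a'" using \<open>a' = Inr S\<close> by simp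
  qed
  show "(\<lambda>S. if m \<in> S then Inr (S - {m}) else Inl S) ` {S. S \<subseteq> insert m A \<and> card S = k}
    \<subseteq> {S. S \<subseteq> A \<and> card S = k} <+> {S. S \<subseteq> A \<and> card S = k - 1}"
  proof clarify
    fix S assume S: "S \<subseteq> insert m A" "k = card S"
    have "finite S" using assms(1) S(1) by (intro rev_finite_subset[of "insert m A" S]) simp_all
    thus "(if m \<in> S then Inr (S - {m}) else Inl S)
          \<in> {Sa. Sa \<subseteq> A \<and> card Sa = card S} <+> {S'. S' \<subseteq> A \<and> card S' = card S - 1}"
    proof (cases "m \<in> S")
      case True
      have "S - {m} \<subseteq> A" using S by blast
      moreover have "card (S - {m}) = card S - 1" using True \<open>finite S\<close> by simp
      ultimately show ?thesis using True \<open>finite S\<close> by (simp add: InrI)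
    next
      case False
      hence "S \<subseteq> A" using S by blast
      thus ?thesis using False by (simp add: InlI)
    qed
  qed
  show "case_sum id (insert m) ` ({S. S \<subseteq> A \<and> card S = k} <+> {S. S \<subseteq> A \<and> card S = k - 1})
    \<subseteq> {S. S \<subseteq> insert m A \<and> card S = k}"
  proof
    fix y assume "y \<in> case_sum id (insert m) ` ({S. S \<subseteq> A \<and> card S = k} <+> {S. S \<subseteq> A \<and> card S = k - 1})"
    then obtain z where z: "z \<in> {S. S \<subseteq> A \<and> card S = k} <+> {S. S \<subseteq> A \<and> card S = k - 1}"
      and y: "y = case_sum id (insert m) z" by blast
    show "y \<in> {S. S \<subseteq> insert m A \<and> card S = k}"
      using z
    proof (elim PlusE)
      fix S assume "S \<in> {S. S \<subseteq> A \<and> card S = k}" "z = Inl S"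
      thus ?thesis using y by (auto simp: subset_insertI2)
    next
      fix S assume S: "S \<in> {S. S \<subseteq> A \<and> card S = k - 1}" "z = Inr S"
      have SA: "S \<subseteq> A" and cS: "card S = k - 1" using S(1) by auto
      have fS: "finite S" using assms(1) SA by (rule rev_finite_subset)
      have mS: "m \<notin> S" using SA assms(2) by blast
      have "y = insert m S" using y S(2) by simp
      moreover have "card (insert m S) = k" using fS mS cS assms(3) by simp
      moreover have "insert m S \<subseteq> insert m A" using SA by blast
      ultimately show ?thesis by simp
    qed
  qed
qed

theorem theorem4p1:
  fixes n :: nat
  assumes "n \<ge> 3"
  shows "\<exists>(C1 :: (nat set, nat set) incidence_structure)
            (C2 :: (nat set, nat set) incidence_structure) I.
     valid_sum_set C1 I C2 \<and>
     isomorphic (DCD n) (incidence_sum C1 I C2) \<and>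
     is_configuration C1 ((2*n-2) choose (n-2)) n ((2*n-2) choose (n-1)) (n-1) \<and>
     is_configuration C2 ((2*n-2) choose (n-1)) (n-1) ((2*n-2) choose (n-2)) n \<and>
     I \<subseteq> {(Inr x, Inl L) | x L. x \<in> pts C2 \<and> L \<in> lns C1} \<and>
     card I = (2*n-2) choose (n-1) \<and>
     dual_to C1 C2 \<and>
     flag_transitive C1 \<and> flag_transitive C2"
proof -
  define A where "A = {1..2*n-2}"
  define m where "m = 2*n-1"
  define C1 where "C1 = K A n (n-1)"
  define C2 where "C2 = K A (n-1) (n-2)"
  define I :: "((nat set + nat set) \<times> (nat set + nat set)) set"
    where "I = (\<lambda>T. (Inr T, Inl T)) ` {T. T \<subseteq> A \<and> card T = n - 1}"
  have fA: "finite A" and cA: "card A = 2*n-2" and mA: "m \<notin> A" using assms by (auto simp: A_def m_def)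
  have U: "{1..2*n-1} = insert m A" using assms by (auto simp: A_def m_def)
  have n2: "n - 1 - 1 = n - 2" by simp
  have C2': "C2 = K A (n-1) (n-1-1)" by (simp add: C2_def numeral_2_eq_2)
  have Isub: "I \<subseteq> {(Inr x, Inl L) | x L. x \<in> pts C2 \<and> L \<in> lns C1}"
  proof
    fix z assume "z \<in> I"
    then obtain T where "T \<subseteq> A" "card T = n - 1" "z = (Inr T, Inl T)" unfolding I_def by blast
    thus "z \<in> {(Inr x, Inl L) | x L. x \<in> pts C2 \<and> L \<in> lns C1}" by (simp add: C1_def C2_def)
  qed
  have valid: "valid_sum_set C1 I C2" unfolding valid_sum_set_def using Isub by (rule order_trans) (rule Un_upper2)
  have cardI: "card I = (2*n-2) choose (n-1)"
  proof -
    have inj: "inj_on (\<lambda>T. (Inr T, Inl T) :: (nat set + nat set) \<times> (nat set + nat set)) {T. T \<subseteq> A \<and> card T = n - 1}"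
      by (auto simp: inj_on_def)
    show ?thesis unfolding I_def card_image[OF inj] n_subsets[OF fA] cA ..
  qed
  have conf1: "is_configuration C1 ((2*n-2) choose (n-2)) n ((2*n-2) choose (n-1)) (n-1)"
  proof -
    have "is_configuration C1 (card A choose n) n (card A choose (n-1)) (card A - (n-1))"
      unfolding C1_def by (rule K_config) (use fA cA assms in auto)
    moreover have "card A choose n = (2*n-2) choose (n-2)"
    proof -
      have e: "2*n-2-(n-2) = n" using assms by simp
      have "(2*n-2) choose (n-2) = (2*n-2) choose (2*n-2-(n-2))"
        by (rule binomial_symmetric) (use assms in simp)
      hence "(2*n-2) choose (n-2) = (2*n-2) choose n" by (simp only: e)
      thus ?thesis using cA by simp
    qed
    moreover have "card A - (n-1) = n - 1" using cA assms by auto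
    ultimately show ?thesis using cA by simp
  qed
  have conf2: "is_configuration C2 ((2*n-2) choose (n-1)) (n-1) ((2*n-2) choose (n-2)) n"
  proof -
    have "is_configuration C2 (card A choose (n-1)) (n-1) (card A choose (n-1-1)) (card A - (n-1-1))"
      unfolding C2' by (rule K_config) (use fA cA assms in auto)
    moreover have "card A - (n-1-1) = n" using cA assms by auto
    ultimately show ?thesis using cA n2 by simp
  qed
  have dual: "dual_to C1 C2"
  proof -
    have "dual_to (K A n (n-1)) (K A ((2*n-2) - (n-1)) ((2*n-2) - n))"
      by (rule K_dual) (use fA cA assms in auto)
    moreover have "(2*n-2) - (n-1) = n - 1" "(2*n-2) - n = n - 2" using assms by auto
    ultimately show ?thesis by (simp add: C1_def C2_def)
  qed
  have ft1: "flag_transitive C1" unfolding C1_def by (rule K_flag) (use fA assms in auto)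
  have ft2: "flag_transitive C2" unfolding C2' by (rule K_flag) (use fA assms in auto)
  define f where "f S = (if m \<in> S then Inr (S - {m}) else Inl S)" for S :: "nat set"
  have iso: "isomorphic (DCD n) (incidence_sum C1 I C2)"
    unfolding isomorphic_def
  proof (intro exI conjI ballI)
    show "bij_betw f (pts (DCD n)) (pts (incidence_sum C1 I C2))"
      unfolding f_def DCD_def incidence_sum_def C1_def C2_def U
      using split_bij[OF fA mA, of n] assms n2 by simp
    show "bij_betw f (lns (DCD n)) (lns (incidence_sum C1 I C2))"
      unfolding f_def DCD_def incidence_sum_def C1_def C2_def U
      using split_bij[OF fA mA, of "n-1"] assms n2 by simp
  next
    fix S L assume S: "S \<in> pts (DCD n)" and L: "L \<in> lns (DCD n)"
    have S': "S \<subseteq> insert m A" "card S = n" and L': "L \<subseteq> insert m A" "card L = n - 1"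
    proof -
      have "S \<subseteq> {1..2*n-1}" "card S = n" "L \<subseteq> {1..2*n-1}" "card L = n - 1"
        using S L by (simp_all add: DCD_def)
      thus "S \<subseteq> insert m A" "card S = n" "L \<subseteq> insert m A" "card L = n - 1" unfolding U by simp_all
    qed
    have fS: "finite S" using fA S'(1) by (intro rev_finite_subset[of "insert m A" S]) simp_all
    show "inc (incidence_sum C1 I C2) (f S) (f L) = inc (DCD n) S L"
    proof (cases "m \<in> S")
      case True
      show ?thesis
      proof (cases "m \<in> L")
        case True
        thus ?thesis using \<open>m \<in> S\<close> by (auto simp: f_def incidence_sum_def DCD_def C2_def)
      next
        case False
        have "(Inr (S - {m}), Inl L) \<in> I \<longleftrightarrow> L \<subseteq> S"
        proof
          assume "(Inr (S - {m}), Inl L) \<in> I" thus "L \<subseteq> S" by (auto simp: I_def)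
        next
          assume "L \<subseteq> S"
          hence sub: "L \<subseteq> S - {m}" using False by auto
          have cS: "card (S - {m}) = n - 1" using True S' by simp
          have "L = S - {m}" using card_subset_eq[OF _ sub] fS cS L' by auto
          moreover have "S - {m} \<subseteq> A" using S' by auto
          ultimately show "(Inr (S - {m}), Inl L) \<in> I" using cS unfolding I_def by auto
        qed
        thus ?thesis using True False by (auto simp: f_def incidence_sum_def DCD_def)
      qed
    next
      case False
      show ?thesis
      proof (cases "m \<in> L")
        case True
        have "(Inl S, Inr (L - {m})) \<notin> I" by (auto simp: I_def)
        moreover have "\<not> L \<subseteq> S" using True False by auto
        ultimately show ?thesis using True False by (auto simp: f_def incidence_sum_def DCD_def)
      next
        case True2: False
        thus ?thesis using False by (auto simp: f_def incidence_sum_def DCD_def C1_def)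
      qed
    qed
  qed
  show ?thesis using valid iso conf1 conf2 Isub cardI dual ft1 ft2 by blast
qed

end
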